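(* Let $n \in \mathbb{N}$ and let $(F, M, \mathcal{R}, c)$ be an instance of the feasibility problem such that either (i) $c_r \in \{1, 2, \dots, n\}$ for all $r \in \mathcal{R}$ and $R_i > 0$ for every $i = 1, \dots, n$; or (ii) $c_r \in \{2^0, 2^1, \dots, 2^n\}$ for all $r \in \mathcal{R}$ and $R_{2^i} > 0$ for every $i = 0, \dots, n$. Then the instance is feasible if and only if $$F + M \le \sum_{r \in \mathcal{R}} c_r.$$
   Context: An instance $(F, M, \mathcal{R}, c)$ of the feasibility problem (of patient-to-room assignment with gender separation, for a single time period) consists of nonnegative integers $F$ (number of female patients) and $M$ (number of male patients), a finite set $\mathcal{R}$ of rooms, and a capacity $c_r \in \mathbb{N}$ (positive integer) for each room $r \in \mathcal{R}$. The instance is called feasible if there exists a subset $S \subseteq \mathcal{R}$ with $\sum_{r \in S} c_r \ge F$ and $\sum_{r \in \mathcal{R} \setminus S} c_r \ge M$. For $k \in \mathbb{N}$, $R_k := |\{ r \in \mathcal{R} : c_r = k\}|$ denotes the number of rooms of capacity $k$. *)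

theory Defs
  imports Main
begin

text \<open>An instance (F, M, Rs, c): F female and M male patients, a finite set Rs of rooms,
  and positive integer capacities c r for r in Rs.\<close>

definition is_instance :: "nat \<Rightarrow> nat \<Rightarrow> 'r set \<Rightarrow> ('r \<Rightarrow> nat) \<Rightarrow> bool" where
  "is_instance F M Rs c \<longleftrightarrow> finite Rs \<and> (\<forall>r\<in>Rs. c r > 0)"

definition feasible :: "nat \<Rightarrow> nat \<Rightarrow> 'r set \<Rightarrow> ('r \<Rightarrow> nat) \<Rightarrow> bool" where
  "feasible F M Rs c \<longleftrightarrow>
     (\<exists>S. S \<subseteq> Rs \<and> (\<Sum>r\<in>S. c r) \<ge> F \<and> (\<Sum>r\<in>Rs - S. c r) \<ge> M)"

definition num_rooms :: "'r set \<Rightarrow> ('r \<Rightarrow> nat) \<Rightarrow> nat \<Rightarrow> nat" where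
  "num_rooms Rs c k = card {r \<in> Rs. c r = k}"

end

theory Submission
  imports Defs
begin

lemma cover:
  fixes c :: "'r \<Rightarrow> nat"
  shows "finite Rs \<Longrightarrow> (\<forall>r\<in>Rs. c r \<le> 1 + (\<Sum>s\<in>{s\<in>Rs. c s < c r}. c s)) \<Longrightarrow>
    t \<le> (\<Sum>r\<in>Rs. c r) \<Longrightarrow> \<exists>S\<subseteq>Rs. (\<Sum>r\<in>S. c r) = t"
proof (induction "card Rs" arbitrary: Rs t rule: less_induct)
  case less
  show ?case
  proof (cases "Rs = {}")
    case True then have "t = 0" using less.prems(3) by simp
    then show ?thesis using True by (intro exI[of _ "{}"]) simp
  next
    case False
    have "Max (c ` Rs) \<in> c ` Rs" using False less.prems(1) by simp
    then obtain r where r1: "r \<in> Rs" "c r = Max (c ` Rs)" by auto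
    have r: "r \<in> Rs" "\<forall>s\<in>Rs. c s \<le> c r"
      using r1 less.prems(1) by auto
    define Rs' where "Rs' = Rs - {r}"
    have fin: "finite Rs'" using less.prems(1) Rs'_def by auto
    have cardlt: "card Rs' < card Rs" unfolding Rs'_def
      using card_Diff1_less[OF less.prems(1) r(1)] .
    have eqset: "\<And>s. s \<in> Rs' \<Longrightarrow> {s'\<in>Rs'. c s' < c s} = {s'\<in>Rs. c s' < c s}"
      using r Rs'_def by auto
    have cond': "\<forall>s\<in>Rs'. c s \<le> 1 + (\<Sum>s'\<in>{s'\<in>Rs'. c s' < c s}. c s')"
    proof
      fix s assume s: "s \<in> Rs'"
      then have "s \<in> Rs" using Rs'_def by simp
      then have "c s \<le> 1 + (\<Sum>s'\<in>{s'\<in>Rs. c s' < c s}. c s')" using less.prems(2) by blast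
      then show "c s \<le> 1 + (\<Sum>s'\<in>{s'\<in>Rs'. c s' < c s}. c s')" using eqset[OF s] by simp
    qed
    have tot: "(\<Sum>s\<in>Rs. c s) = c r + (\<Sum>s\<in>Rs'. c s)"
      using r(1) less.prems(1) Rs'_def by (simp add: sum.remove)
    have sub: "{s\<in>Rs. c s < c r} \<subseteq> Rs'" using Rs'_def by auto
    have "(\<Sum>s\<in>{s\<in>Rs. c s < c r}. c s) \<le> (\<Sum>s\<in>Rs'. c s)"
      using sum_mono2[OF fin sub] by auto
    moreover have "c r \<le> 1 + (\<Sum>s\<in>{s\<in>Rs. c s < c r}. c s)" using less.prems(2) r(1) by blast
    ultimately have big: "c r \<le> 1 + (\<Sum>s\<in>Rs'. c s)" by linarith
    show ?thesis
    proof (cases "t \<le> (\<Sum>s\<in>Rs'. c s)")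
      case True
      then obtain S where "S \<subseteq> Rs'" "(\<Sum>r\<in>S. c r) = t"
        using less.hyps[OF cardlt fin cond'] by blast
      then show ?thesis using Rs'_def by blast
    next
      case False
      then have "t - c r \<le> (\<Sum>s\<in>Rs'. c s)" using less.prems(3) tot by linarith
      then obtain S where S: "S \<subseteq> Rs'" "(\<Sum>r\<in>S. c r) = t - c r"
        using less.hyps[OF cardlt fin cond'] by blast
      have "r \<notin> S" using S Rs'_def by auto
      moreover have "finite S" using S fin finite_subset by blast
      ultimately have "(\<Sum>x\<in>insert r S. c x) = c r + (t - c r)" using S by simp
      also have "\<dots> = t" using False big by linarith
      finally have "(\<Sum>x\<in>insert r S. c x) = t" .
      moreover have "insert r S \<subseteq> Rs" using S(1) r(1) Rs'_def by blast
      ultimately show ?thesis by blast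
    qed
  qed
qed

lemma sum_lower:
  fixes c :: "'r \<Rightarrow> nat"
  assumes "finite Rs" "inj_on g J" "g ` J \<subseteq> {s\<in>Rs. c s < v}"
  shows "(\<Sum>j\<in>J. c (g j)) \<le> (\<Sum>s\<in>{s\<in>Rs. c s < v}. c s)"
proof -
  have "(\<Sum>j\<in>J. c (g j)) = (\<Sum>s\<in>g ` J. c s)" using assms(2) by (simp add: sum.reindex)
  also have "\<dots> \<le> (\<Sum>s\<in>{s\<in>Rs. c s < v}. c s)"
    using assms by (intro sum_mono2) auto
  finally show ?thesis .
qed

theorem mainTheorem1:
  fixes n F M :: nat and Rs :: "'r set" and c :: "'r \<Rightarrow> nat"
  assumes inst: "is_instance F M Rs c"
    and cases: "((\<forall>r\<in>Rs. c r \<in> {1..n}) \<and> (\<forall>i\<in>{1..n}. num_rooms Rs c i > 0))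
              \<or> ((\<forall>r\<in>Rs. c r \<in> {2 ^ i | i. i \<le> n}) \<and> (\<forall>i\<le>n. num_rooms Rs c (2 ^ i) > 0))"
  shows "feasible F M Rs c \<longleftrightarrow> F + M \<le> (\<Sum>r\<in>Rs. c r)"
proof
  have fin: "finite Rs" and pos: "\<forall>r\<in>Rs. c r > 0" using inst by (auto simp: is_instance_def)
  assume "feasible F M Rs c"
  then obtain S where S: "S \<subseteq> Rs" "(\<Sum>r\<in>S. c r) \<ge> F" "(\<Sum>r\<in>Rs - S. c r) \<ge> M"
    by (auto simp: feasible_def)
  have "(\<Sum>r\<in>Rs. c r) = (\<Sum>r\<in>S. c r) + (\<Sum>r\<in>Rs - S. c r)"
    using S(1) fin by (metis add.commute sum.subset_diff)
  then show "F + M \<le> (\<Sum>r\<in>Rs. c r)" using S by linarith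
next
  have fin: "finite Rs" and pos: "\<forall>r\<in>Rs. c r > 0" using inst by (auto simp: is_instance_def)
  assume tot: "F + M \<le> (\<Sum>r\<in>Rs. c r)"
  have ex: "\<And>k. num_rooms Rs c k > 0 \<Longrightarrow> \<exists>s\<in>Rs. c s = k"
    by (fastforce simp: num_rooms_def card_gt_0_iff)
  have cond: "\<forall>r\<in>Rs. c r \<le> 1 + (\<Sum>s\<in>{s\<in>Rs. c s < c r}. c s)"
  proof
    fix r assume r: "r \<in> Rs"
    from cases show "c r \<le> 1 + (\<Sum>s\<in>{s\<in>Rs. c s < c r}. c s)"
    proof
      assume A: "(\<forall>r\<in>Rs. c r \<in> {1..n}) \<and> (\<forall>i\<in>{1..n}. num_rooms Rs c i > 0)"
      define g where "g j = (SOME s. s \<in> Rs \<and> c s = j)" for j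
      have g: "g j \<in> Rs \<and> c (g j) = j" if "j \<in> {1..<c r}" for j
      proof -
        have "j \<in> {1..n}" using that A r by auto
        then have "\<exists>s\<in>Rs. c s = j" using A ex by blast
        then show ?thesis unfolding g_def by (metis (mono_tags, lifting) someI_ex)
      qed
      have inj: "inj_on g {1..<c r}" by (metis g inj_onI)
      have "(\<Sum>j\<in>{1..<c r}. c (g j)) \<le> (\<Sum>s\<in>{s\<in>Rs. c s < c r}. c s)"
        by (rule sum_lower[OF fin inj]) (use g in auto)
      moreover have "(\<Sum>j\<in>{1..<c r}. c (g j)) \<ge> (\<Sum>j\<in>{1..<c r}. 1)"
        by (rule sum_mono) (use g in auto)
      ultimately show ?thesis by simp
    next
      assume A: "(\<forall>r\<in>Rs. c r \<in> {2 ^ i | i. i \<le> n}) \<and> (\<forall>i\<le>n. num_rooms Rs c (2 ^ i) > 0)"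
      then obtain k where k: "c r = 2 ^ k" "k \<le> n" using r by auto
      define g where "g j = (SOME s. s \<in> Rs \<and> c s = 2 ^ j)" for j
      have g: "g j \<in> Rs \<and> c (g j) = 2 ^ j" if "j < k" for j
      proof -
        have "\<exists>s\<in>Rs. c s = 2 ^ j" using A ex that k by auto
        then show ?thesis unfolding g_def by (metis (mono_tags, lifting) someI_ex)
      qed
      have inj: "inj_on g {..<k}"
        by (rule inj_onI) (metis g lessThan_iff power_inject_exp one_less_numeral_iff semiring_norm(76))
      have "(\<Sum>j\<in>{..<k}. c (g j)) \<le> (\<Sum>s\<in>{s\<in>Rs. c s < c r}. c s)"
        by (rule sum_lower[OF fin inj]) (use g k in auto)
      moreover have "(\<Sum>j\<in>{..<k}. c (g j)) = (\<Sum>j\<in>{..<k}. (2::nat) ^ j)"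
        by (rule sum.cong) (use g in auto)
      moreover have "(\<Sum>j\<in>{..<k}. (2::nat) ^ j) = 2 ^ k - 1"
        by (induction k) auto
      ultimately show ?thesis using k by simp
    qed
  qed
  have "F \<le> (\<Sum>r\<in>Rs. c r)" using tot by simp
  then obtain S where S: "S \<subseteq> Rs" "(\<Sum>r\<in>S. c r) = F" using cover[OF fin cond] by blast
  have "(\<Sum>r\<in>Rs. c r) = (\<Sum>r\<in>S. c r) + (\<Sum>r\<in>Rs - S. c r)"
    using S(1) fin by (metis add.commute sum.subset_diff)
  then have "(\<Sum>r\<in>Rs - S. c r) \<ge> M" using S(2) tot by linarith
  then show "feasible F M Rs c" unfolding feasible_def using S by blast
qed

end
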